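(* Let $l\ge0$ be an integer and, for $\zeta,\eta>0$, let $$\mathcal{G}_0(\zeta,\eta)=\frac{\eta^{l+1}\zeta^{-l}-\zeta^{l+1}\eta^{-l}}{2l+1},\qquad H_0(\zeta)=\sqrt{\tfrac{2}{\pi}}\,e^{\zeta}\zeta^{1/2}K_{l+1/2}(\zeta),$$ where $K_{l+1/2}$ is the modified Bessel function of the second kind. Then for every $\zeta>0$, $$\int_\zeta^\infty e^{-\eta+\zeta}\mathcal{G}_0(\zeta,\eta)\frac{H_0(\eta)}{H_0(\zeta)}d\eta=1,\qquad \int_\zeta^\infty e^{-\eta+\zeta}\,\partial_\zeta\mathcal{G}_0(\zeta,\eta)\frac{H_0(\eta)}{H_0(\zeta)}d\eta=-1+\frac{H_0'(\zeta)}{H_0(\zeta)}.$$ *)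

theory Defs
  imports "HOL-Analysis.Analysis"
begin

definition besselK :: "real \<Rightarrow> real \<Rightarrow> real" where
  "besselK nu z = integral {0..} (\<lambda>t. exp (- z * cosh t) * cosh (nu * t))"

definition G0 :: "nat \<Rightarrow> real \<Rightarrow> real \<Rightarrow> real" where
  "G0 l \<zeta> \<eta> = (\<eta> ^ (l+1) * \<zeta> powr (- real l) - \<zeta> ^ (l+1) * \<eta> powr (- real l)) / (2 * real l + 1)"

definition H0 :: "nat \<Rightarrow> real \<Rightarrow> real" where
  "H0 l \<zeta> = sqrt (2 / pi) * exp \<zeta> * \<zeta> powr (1/2) * besselK (real l + 1/2) \<zeta>"

end

theory Submission
  imports Defs
begin
definition kern :: "real \<Rightarrow> nat \<Rightarrow> real \<Rightarrow> real \<Rightarrow> real" where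
  "kern \<nu> m z t = cosh t ^ m * exp (- z * cosh t) * cosh (\<nu> * t)"

lemma exp_ge_pow_fact:
  fixes x :: real assumes "0 \<le> x"
  shows "x ^ N / fact N \<le> exp x"
proof -
  from Maclaurin_exp_le[of x "Suc N"] obtain t where t:
    "exp x = (\<Sum>m<Suc N. (x ^ m) / fact m) + (exp t / fact (Suc N)) * x ^ Suc N" by blast
  have r: "(exp t / fact (Suc N)) * x ^ Suc N \<ge> 0" using assms by simp
  have "x ^ N / fact N \<le> (\<Sum>m<Suc N. (x ^ m) / fact m)"
    using assms by (intro member_le_sum) auto
  then show ?thesis using t r by linarith
qed

lemma cosh_ge_exp_half: "exp t / 2 \<le> cosh (t::real)"
  by (simp add: cosh_def divide_right_mono)

lemma cosh_le_exp: "0 \<le> (t::real) \<Longrightarrow> cosh t \<le> exp t"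
proof -
  assume "0 \<le> t"
  then have "exp (-t) \<le> exp t" by simp
  then show ?thesis unfolding cosh_def by simp
qed

lemma kern_nonneg: "0 \<le> kern \<nu> m z t"
  by (simp add: kern_def)

lemma kern_bound:
  fixes \<nu> z t :: real and m N :: nat
  assumes "\<nu> \<ge> 0" "z > 0" "t \<ge> 0" "real N \<ge> real m + \<nu> + 1"
  shows "kern \<nu> m z t \<le> (fact N * 2 ^ N / z ^ N) * exp (- t)"
proof -
  define c where "c = cosh t"
  have c1: "c \<ge> 1" by (simp add: c_def cosh_real_ge_1)
  have cexp: "exp t / 2 \<le> c" unfolding c_def by (rule cosh_ge_exp_half)
  have Nm: "N \<ge> m" using assms by linarith
  have zc: "z * c > 0" using assms c1 by auto
  have "(z * c) ^ N / fact N \<le> exp (z * c)"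
    using zc by (intro exp_ge_pow_fact) auto
  then have "exp (- z * c) * ((z * c) ^ N / fact N) \<le> exp (- z * c) * exp (z * c)"
    by (rule mult_left_mono) auto
  also have "exp (- z * c) * exp (z * c) = 1" by (simp flip: exp_add)
  finally have "exp (- z * c) * (z * c) ^ N \<le> fact N" by (simp add: field_simps)
  then have e1: "exp (- z * c) \<le> fact N / (z * c) ^ N"
    using zc by (simp add: pos_le_divide_eq)
  have e2: "cosh (\<nu> * t) \<le> exp (\<nu> * t)"
    using assms by (intro cosh_le_exp) auto
  have "kern \<nu> m z t \<le> c ^ m * (fact N / (z * c) ^ N) * exp (\<nu> * t)"
    unfolding kern_def c_def[symmetric]
    using e1 e2 c1 zc by (intro mult_mono) auto
  also have "\<dots> = fact N / z ^ N / c ^ (N - m) * exp (\<nu> * t)"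
  proof -
    have "c ^ N = c ^ m * c ^ (N - m)" using Nm
      by (simp flip: power_add)
    then show ?thesis using c1 assms by (simp add: power_mult_distrib field_simps)
  qed
  also have "\<dots> \<le> fact N / z ^ N / (exp t / 2) ^ (N - m) * exp (\<nu> * t)"
    using assms cexp c1 by (intro mult_right_mono divide_left_mono power_mono mult_pos_pos) auto
  also have "\<dots> = fact N / z ^ N * 2 ^ (N - m) * exp (\<nu> * t - real (N - m) * t)"
    by (simp add: power_divide exp_diff exp_of_nat_mult[symmetric] mult.commute)
  also have "\<dots> \<le> fact N / z ^ N * 2 ^ N * exp (- t)"
  proof (intro mult_mono)
    show "(2::real) ^ (N - m) \<le> 2 ^ N" by (intro power_increasing) auto
    have "real (N - m) \<ge> \<nu> + 1" using assms Nm by (simp add: of_nat_diff)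
    then have "real (N - m) * t \<ge> (\<nu> + 1) * t"
      using assms by (intro mult_right_mono) auto
    then have "\<nu> * t - real (N - m) * t \<le> - t"
      by (simp add: algebra_simps)
    then show "exp (\<nu> * t - real (N - m) * t) \<le> exp (- t)" by simp
  qed (use assms in auto)
  finally show ?thesis by (simp add: field_simps)
qed

lemma kern_cont: "continuous_on S (kern \<nu> m z)"
  unfolding kern_def by (intro continuous_intros)

lemma kern_integrable:
  assumes "\<nu> \<ge> 0" "z > 0"
  shows "kern \<nu> m z integrable_on {0..}"
proof -
  define N where "N = m + nat \<lceil>\<nu>\<rceil> + 1"
  have N: "real N \<ge> real m + \<nu> + 1" unfolding N_def by linarith
  define C where "C = fact N * 2 ^ N / z ^ N"
  have g: "(\<lambda>t. C * exp (- t)) integrable_on {0..}"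
  proof -
    have "(\<lambda>x. exp (- 1 * x) :: real) integrable_on {0..}"
      by (rule integrable_on_exp_minus_to_infinity) simp
    then have "(\<lambda>x. exp (- x) :: real) integrable_on {0..}" by simp
    then show ?thesis by (rule integrable_on_mult_right)
  qed
  show ?thesis
  proof (rule measurable_bounded_by_integrable_imp_integrable[OF _ g])
    show "kern \<nu> m z \<in> borel_measurable (lebesgue_on {0..})"
      by (intro continuous_imp_measurable_on_sets_lebesgue kern_cont) auto
    show "norm (kern \<nu> m z t) \<le> C * exp (- t)" if "t \<in> {0..}" for t
      using kern_bound[OF assms(1,2) _ N, of t] that kern_nonneg[of \<nu> m z t]
      by (simp add: C_def)
  qed auto
qed

lemma exp_taylor2: fixes x :: real shows "\<bar>exp x - 1 - x\<bar> \<le> x\<^sup>2 * exp \<bar>x\<bar>"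
proof -
  from Maclaurin_exp_le[of x 2] obtain s where s: "\<bar>s\<bar> \<le> \<bar>x\<bar>"
    "exp x = (\<Sum>m<2. (x ^ m) / fact m) + (exp s / fact 2) * x ^ 2" by blast
  have e: "exp x - 1 - x = exp s / 2 * x\<^sup>2" using s(2) by (simp add: numeral_2_eq_2)
  have "exp s \<le> exp \<bar>x\<bar>" using s(1) by simp
  have "\<bar>exp x - 1 - x\<bar> = exp s / 2 * x\<^sup>2" unfolding e by (intro abs_of_nonneg) simp
  also have "\<dots> \<le> exp \<bar>x\<bar> * x\<^sup>2"
  proof (rule mult_right_mono)
    show "exp s / 2 \<le> exp \<bar>x\<bar>" using \<open>exp s \<le> exp \<bar>x\<bar>\<close> exp_gt_zero[of "\<bar>x\<bar>"] by linarith
  qed simp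
  finally show ?thesis by (simp add: mult.commute)
qed

lemma kern_taylor:
  assumes "\<bar>h\<bar> \<le> z / 2"
  shows "\<bar>kern \<nu> m (z + h) t - kern \<nu> m z t + h * kern \<nu> (Suc m) z t\<bar>
          \<le> h\<^sup>2 * kern \<nu> (Suc (Suc m)) (z / 2) t"
proof -
  define c where "c = cosh t"
  have c1: "c \<ge> 1" by (simp add: c_def cosh_real_ge_1)
  define A where "A = c ^ m * exp (- z * c) * cosh (\<nu> * t)"
  have A: "A \<ge> 0" using c1 by (simp add: A_def)
  define x where "x = - h * c"
  have "kern \<nu> m (z + h) t - kern \<nu> m z t + h * kern \<nu> (Suc m) z t = A * (exp x - 1 - x)"
    unfolding kern_def c_def[symmetric] A_def x_def
    by (simp add: algebra_simps exp_add[symmetric])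
  then have "\<bar>kern \<nu> m (z + h) t - kern \<nu> m z t + h * kern \<nu> (Suc m) z t\<bar> = A * \<bar>exp x - 1 - x\<bar>"
    using A by (simp add: abs_mult)
  also have "\<dots> \<le> A * (x\<^sup>2 * exp \<bar>x\<bar>)"
    by (intro mult_left_mono exp_taylor2 A)
  also have "\<dots> \<le> A * (x\<^sup>2 * exp (z / 2 * c))"
  proof -
    have "\<bar>x\<bar> = \<bar>h\<bar> * c" using c1 by (simp add: x_def abs_mult)
    also have "\<dots> \<le> z / 2 * c" using assms c1 by (intro mult_right_mono) auto
    finally show ?thesis using A by (intro mult_left_mono) auto
  qed
  also have "\<dots> = h\<^sup>2 * kern \<nu> (Suc (Suc m)) (z / 2) t"
  proof -
    have "exp (- z * c) * exp (z / 2 * c) = exp (- (z / 2) * c)" by (simp flip: exp_add)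
    then show ?thesis
      unfolding kern_def c_def[symmetric] A_def x_def
      by (simp add: power2_eq_square algebra_simps)
  qed
  finally show ?thesis .
qed

definition Km :: "real \<Rightarrow> nat \<Rightarrow> real \<Rightarrow> real" where
  "Km \<nu> m z = integral {0..} (kern \<nu> m z)"

lemma Km_nonneg: "Km \<nu> m z \<ge> 0"
proof (cases "kern \<nu> m z integrable_on {0..}")
  case True
  then show ?thesis unfolding Km_def by (intro Henstock_Kurzweil_Integration.integral_nonneg) (auto simp: kern_nonneg)
next
  case False
  then show ?thesis unfolding Km_def by (simp add: not_integrable_integral)
qed

lemma Km_taylor:
  assumes "\<nu> \<ge> 0" "z > 0" "\<bar>h\<bar> \<le> z / 2"
  shows "\<bar>Km \<nu> m (z + h) - Km \<nu> m z + h * Km \<nu> (Suc m) z\<bar> \<le> h\<^sup>2 * Km \<nu> (Suc (Suc m)) (z / 2)"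
proof -
  have zh: "z + h > 0" using assms by linarith
  note I = kern_integrable[OF assms(1) zh] kern_integrable[OF assms(1,2)]
    kern_integrable[OF assms(1,2), of "Suc m"] kern_integrable[OF assms(1), of "z/2"]
  have "Km \<nu> m (z + h) - Km \<nu> m z + h * Km \<nu> (Suc m) z =
      integral {0..} (\<lambda>t. kern \<nu> m (z + h) t - kern \<nu> m z t + h * kern \<nu> (Suc m) z t)"
  proof -
    have "((\<lambda>t. kern \<nu> m (z + h) t - kern \<nu> m z t + h * kern \<nu> (Suc m) z t) has_integral
        (Km \<nu> m (z + h) - Km \<nu> m z + h * Km \<nu> (Suc m) z)) {0..}"
      unfolding Km_def
      by (intro has_integral_add has_integral_diff has_integral_mult_right integrable_integral I)
    then show ?thesis by (simp add: integral_unique)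
  qed
  also have "\<bar>\<dots>\<bar> \<le> integral {0..} (\<lambda>t. h\<^sup>2 * kern \<nu> (Suc (Suc m)) (z / 2) t)"
  proof -
    have hz: "z / 2 > 0" using assms by simp
    have "norm (integral {0..} (\<lambda>t. kern \<nu> m (z + h) t - kern \<nu> m z t + h * kern \<nu> (Suc m) z t))
      \<le> integral {0..} (\<lambda>t. h\<^sup>2 * kern \<nu> (Suc (Suc m)) (z / 2) t)"
    proof (rule integral_norm_bound_integral)
      show "(\<lambda>t. kern \<nu> m (z + h) t - kern \<nu> m z t + h * kern \<nu> (Suc m) z t) integrable_on {0..}"
        by (intro integrable_add integrable_diff integrable_on_mult_right I)
      show "(\<lambda>t. h\<^sup>2 * kern \<nu> (Suc (Suc m)) (z / 2) t) integrable_on {0..}"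
        by (intro integrable_on_mult_right kern_integrable[OF assms(1) hz])
      show "norm (kern \<nu> m (z + h) t - kern \<nu> m z t + h * kern \<nu> (Suc m) z t)
         \<le> h\<^sup>2 * kern \<nu> (Suc (Suc m)) (z / 2) t" for t
        using kern_taylor[OF assms(3)] by simp
    qed
    then show ?thesis by simp
  qed
  also have "\<dots> = h\<^sup>2 * Km \<nu> (Suc (Suc m)) (z / 2)"
    unfolding Km_def by simp
  finally show ?thesis .
qed

lemma Km_deriv:
  assumes "\<nu> \<ge> 0" "z > 0"
  shows "(Km \<nu> m has_real_derivative - Km \<nu> (Suc m) z) (at z)"
proof -
  define M where "M = Km \<nu> (Suc (Suc m)) (z / 2)"
  have ev: "eventually (\<lambda>y. norm ((Km \<nu> m y - Km \<nu> m z) / (y - z) - - Km \<nu> (Suc m) z)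
      \<le> M * \<bar>y - z\<bar>) (at z)"
    unfolding eventually_at
  proof (intro exI[of _ "z/2"] conjI ballI impI)
    show "z / 2 > 0" using assms by simp
    fix y assume y: "y \<noteq> z \<and> dist y z < z / 2"
    define h where "h = y - z"
    have h0: "h \<noteq> 0" using y by (simp add: h_def)
    have hz: "\<bar>h\<bar> \<le> z / 2" using y by (simp add: h_def dist_real_def)
    have yy: "y = z + h" by (simp add: h_def)
    have "(Km \<nu> m y - Km \<nu> m z) / (y - z) - - Km \<nu> (Suc m) z
        = (Km \<nu> m (z + h) - Km \<nu> m z + h * Km \<nu> (Suc m) z) / h"
      using h0 by (simp add: yy field_simps)
    then have "norm ((Km \<nu> m y - Km \<nu> m z) / (y - z) - - Km \<nu> (Suc m) z)
        = \<bar>Km \<nu> m (z + h) - Km \<nu> m z + h * Km \<nu> (Suc m) z\<bar> / \<bar>h\<bar>"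
      by (simp add: abs_divide)
    also have "\<dots> \<le> h\<^sup>2 * M / \<bar>h\<bar>"
      using Km_taylor[OF assms hz, of m] h0 unfolding M_def by (intro divide_right_mono) auto
    also have "\<dots> = M * \<bar>y - z\<bar>"
      using h0 by (simp add: h_def power2_eq_square field_simps abs_mult_self_eq)
    finally show "norm ((Km \<nu> m y - Km \<nu> m z) / (y - z) - - Km \<nu> (Suc m) z) \<le> M * \<bar>y - z\<bar>" .
  qed
  have "((\<lambda>y. M * \<bar>y - z\<bar>) \<longlongrightarrow> M * \<bar>z - z\<bar>) (at z)"
    by (intro tendsto_intros)
  then have "((\<lambda>y. M * \<bar>y - z\<bar>) \<longlongrightarrow> 0) (at z)" by simp
  from Lim_null_comparison[OF ev this]
  have "((\<lambda>y. (Km \<nu> m y - Km \<nu> m z) / (y - z)) \<longlongrightarrow> - Km \<nu> (Suc m) z) (at z)"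
    by (rule LIM_zero_cancel)
  then show ?thesis by (simp add: has_field_derivative_iff)
qed

lemma Km_decay:
  assumes "\<nu> \<ge> 0" "z \<ge> 1"
  shows "Km \<nu> m z \<le> exp (- (z - 1)) * Km \<nu> m 1"
proof -
  have z0: "z > 0" using assms by simp
  have "integral {0..} (kern \<nu> m z) \<le> integral {0..} (\<lambda>t. exp (- (z - 1)) * kern \<nu> m 1 t)"
  proof (rule integral_le)
    show "kern \<nu> m z integrable_on {0..}" by (rule kern_integrable[OF assms(1) z0])
    show "(\<lambda>t. exp (- (z - 1)) * kern \<nu> m 1 t) integrable_on {0..}"
      by (intro integrable_on_mult_right kern_integrable[OF assms(1)]) simp
    fix t :: real
    have "exp (- (z - 1) * cosh t) \<le> exp (- (z - 1))"
    proof -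
      have "(z - 1) * 1 \<le> (z - 1) * cosh t"
        using assms cosh_real_ge_1[of t] by (intro mult_left_mono) auto
      then have "z - 1 \<le> (z - 1) * cosh t" by simp
      moreover have "- (z - 1) * cosh t = - ((z - 1) * cosh t)" by (simp add: algebra_simps)
      ultimately have "- (z - 1) * cosh t \<le> - (z - 1)" by linarith
      then show ?thesis by (simp only: exp_le_cancel_iff)
    qed
    moreover have "kern \<nu> m z t = exp (- (z - 1) * cosh t) * kern \<nu> m 1 t"
      unfolding kern_def by (simp add: algebra_simps flip: exp_add)
    ultimately show "kern \<nu> m z t \<le> exp (- (z - 1)) * kern \<nu> m 1 t"
      using kern_nonneg[of \<nu> m 1 t] by (simp add: mult_right_mono)
  qed
  then show ?thesis unfolding Km_def by simp
qed

lemma Km_pos: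
  assumes "\<nu> \<ge> 0" "z > 0"
  shows "Km \<nu> m z > 0"
proof -
  have "((\<lambda>t::real. exp (- z * cosh 1)) has_integral exp (- z * cosh 1)) {0..1}"
    using has_integral_const_real[of "exp (- z * cosh 1)" 0 1] by simp
  then have "exp (- z * cosh 1) = integral {0..1} (\<lambda>t::real. exp (- z * cosh 1))"
    by (simp add: integral_unique)
  also have "\<dots> \<le> integral {0..1} (kern \<nu> m z)"
  proof (rule integral_le)
    show "kern \<nu> m z integrable_on {0..1}"
      by (intro integrable_continuous_interval kern_cont)
    fix t :: real assume t: "t \<in> {0..1}"
    have "cosh t \<le> cosh 1" using t by (subst cosh_real_nonneg_le_iff) auto
    then have a: "exp (- z * cosh 1) \<le> exp (- z * cosh t)" using assms by simp
    have b: "1 \<le> cosh t ^ m" using cosh_real_ge_1[of t] by (simp add: one_le_power)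
    have c: "1 \<le> cosh (\<nu> * t)" by (rule cosh_real_ge_1)
    have "exp (- z * cosh t) \<le> cosh t ^ m * exp (- z * cosh t) * cosh (\<nu> * t)"
    proof -
      have "exp (- z * cosh t) \<le> cosh t ^ m * exp (- z * cosh t)"
        using b by (simp add: mult_le_cancel_right1)
      also have "\<dots> \<le> cosh t ^ m * exp (- z * cosh t) * cosh (\<nu> * t)"
        using c mult_left_mono[of 1 "cosh (\<nu> * t)" "cosh t ^ m * exp (- z * cosh t)"] by simp
      finally show ?thesis .
    qed
    then show "exp (- z * cosh 1) \<le> kern \<nu> m z t" using a unfolding kern_def by linarith
  qed auto
  also have "\<dots> \<le> integral {0..} (kern \<nu> m z)"
    by (rule integral_subset_le)
       (auto intro!: integrable_continuous_interval kern_cont kern_integrable assms kern_nonneg)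
  finally have "exp (- z * cosh 1) \<le> integral {0..} (kern \<nu> m z)" .
  then show ?thesis unfolding Km_def using exp_gt_zero[of "- z * cosh 1"] by linarith
qed

lemma Km_ode:
  assumes "\<nu> \<ge> 0" "z > 0"
  shows "z\<^sup>2 * Km \<nu> 2 z - z * Km \<nu> 1 z - (z\<^sup>2 + \<nu>\<^sup>2) * Km \<nu> 0 z = 0"
proof -
  define g where "g t = z\<^sup>2 * kern \<nu> 2 z t - z * kern \<nu> 1 z t - (z\<^sup>2 + \<nu>\<^sup>2) * kern \<nu> 0 z t" for t
  define P where "P t = - z * sinh t * exp (- z * cosh t) * cosh (\<nu> * t)
      - \<nu> * exp (- z * cosh t) * sinh (\<nu> * t)" for t
  note I = kern_integrable[OF assms]
  have gI: "(g has_integral (z\<^sup>2 * Km \<nu> 2 z - z * Km \<nu> 1 z - (z\<^sup>2 + \<nu>\<^sup>2) * Km \<nu> 0 z)) {0..}"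
    unfolding g_def Km_def
    by (intro has_integral_diff has_integral_mult_right integrable_integral I)
  have dP: "(P has_real_derivative g t) (at t)" for t
  proof -
    have "(P has_real_derivative
       (- z * cosh t * exp (- z * cosh t) * cosh (\<nu> * t)
        + z\<^sup>2 * sinh t * sinh t * exp (- z * cosh t) * cosh (\<nu> * t)
        - z * \<nu> * sinh t * exp (- z * cosh t) * sinh (\<nu> * t)
        + \<nu> * z * sinh t * exp (- z * cosh t) * sinh (\<nu> * t)
        - \<nu>\<^sup>2 * exp (- z * cosh t) * cosh (\<nu> * t))) (at t)"
      unfolding P_def
      by (rule derivative_eq_intros refl)+ (simp add: algebra_simps power2_eq_square)
    moreover have "(- z * cosh t * exp (- z * cosh t) * cosh (\<nu> * t)
        + z\<^sup>2 * sinh t * sinh t * exp (- z * cosh t) * cosh (\<nu> * t)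
        - z * \<nu> * sinh t * exp (- z * cosh t) * sinh (\<nu> * t)
        + \<nu> * z * sinh t * exp (- z * cosh t) * sinh (\<nu> * t)
        - \<nu>\<^sup>2 * exp (- z * cosh t) * cosh (\<nu> * t)) = g t"
    proof -
      have e: "cosh t ^ 2 = 1 + sinh t * sinh t" using cosh_square_eq[of t] by (simp add: power2_eq_square)
      show ?thesis unfolding g_def kern_def e by (simp add: algebra_simps power2_eq_square)
    qed
    ultimately show ?thesis by simp
  qed
  define f where "f n = (\<lambda>t. if t \<in> {0..real n} then g t else 0)" for n :: nat
  have fI: "(f n has_integral (P (real n) - P 0)) {0..}" for n
  proof -
    have "(g has_integral (P (real n) - P 0)) {0..real n}"
      using dP by (intro fundamental_theorem_of_calculus)
        (auto simp: has_real_derivative_iff_has_vector_derivative[symmetric] intro: DERIV_subset)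
    then show ?thesis unfolding f_def by (subst has_integral_restrict) auto
  qed
  define h where "h t = z\<^sup>2 * kern \<nu> 2 z t + z * kern \<nu> 1 z t + (z\<^sup>2 + \<nu>\<^sup>2) * kern \<nu> 0 z t" for t
  have hI: "h integrable_on {0..}"
    unfolding h_def by (intro integrable_add integrable_on_mult_right I)
  have gh: "norm (g t) \<le> h t" for t
  proof -
    have a: "z\<^sup>2 * kern \<nu> 2 z t \<ge> 0" "z * kern \<nu> 1 z t \<ge> 0" "(z\<^sup>2 + \<nu>\<^sup>2) * kern \<nu> 0 z t \<ge> 0"
      using assms by (auto intro!: mult_nonneg_nonneg kern_nonneg)
    show ?thesis unfolding g_def h_def real_norm_def using a by arith
  qed
  have "(\<lambda>n. integral {0..} (f n)) \<longlonglongrightarrow> integral {0..} g"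
  proof (rule dominated_convergence(2)[OF _ hI])
    show "f n integrable_on {0..}" for n using fI by blast
    show "norm (f n t) \<le> h t" if "t \<in> {0..}" for n t
      using gh[of t] h_def kern_nonneg assms unfolding f_def
      by (auto intro!: add_nonneg_nonneg mult_nonneg_nonneg)
    show "(\<lambda>n. f n t) \<longlonglongrightarrow> g t" if "t \<in> {0..}" for t
    proof (rule tendsto_eventually)
      have "eventually (\<lambda>n. real n \<ge> t) sequentially"
        by (meson eventually_sequentiallyI nat_ceiling_le_eq)
      then show "eventually (\<lambda>n. f n t = g t) sequentially"
      proof (rule eventually_mono)
        fix n assume "t \<le> real n" then show "f n t = g t" using that by (simp add: f_def)
      qed
    qed
  qed
  moreover have "(\<lambda>n. integral {0..} (f n)) = (\<lambda>n. P (real n) - P 0)"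
    using fI by (auto simp: integral_unique)
  moreover have "(\<lambda>n. P (real n) - P 0) \<longlonglongrightarrow> 0"
  proof -
    have P0: "P 0 = 0" by (simp add: P_def)
    define N where "N = 2 + nat \<lceil>\<nu>\<rceil> + 1"
    have N: "real N \<ge> real 2 + \<nu> + 1" unfolding N_def by linarith
    define C where "C = (z + \<nu>) * (fact N * 2 ^ N / z ^ N)"
    have "norm (P t) \<le> C * exp (- t)" if "t \<ge> 0" for t
    proof -
      have sh0: "0 \<le> sinh t" using that by simp
      have "sinh t \<le> cosh t" by (rule sinh_le_cosh_real)
      also have "cosh t \<le> cosh t ^ 2"
        using cosh_real_ge_1[of t] mult_left_mono[of 1 "cosh t" "cosh t"] by (simp add: power2_eq_square)
      finally have sh1: "sinh t \<le> cosh t ^ 2" .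
      note sh = sh0 sh1
      have shv: "\<bar>sinh (\<nu> * t)\<bar> \<le> cosh (\<nu> * t)"
        using sinh_le_cosh_real[of "\<bar>\<nu> * t\<bar>"] by (simp only: sinh_real_abs cosh_real_abs)
      define E where "E = exp (- z * cosh t)"
      have E: "E > 0" by (simp add: E_def)
      have Pt: "P t = - (z * (sinh t * E * cosh (\<nu> * t))) - \<nu> * (E * sinh (\<nu> * t))"
        by (simp add: P_def E_def algebra_simps)
      have "\<bar>P t\<bar> \<le> \<bar>z * (sinh t * E * cosh (\<nu> * t))\<bar> + \<bar>\<nu> * (E * sinh (\<nu> * t))\<bar>"
        unfolding Pt by arith
      also have "\<dots> = z * (sinh t * E * cosh (\<nu> * t)) + \<nu> * (E * \<bar>sinh (\<nu> * t)\<bar>)"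
        using assms sh0 E by (simp add: abs_mult)
      finally have "\<bar>P t\<bar> \<le> z * (sinh t * exp (- z * cosh t) * cosh (\<nu> * t))
          + \<nu> * (exp (- z * cosh t) * \<bar>sinh (\<nu> * t)\<bar>)" by (simp add: E_def)
      also have "\<dots> \<le> z * kern \<nu> 2 z t + \<nu> * kern \<nu> 2 z t"
      proof (intro add_mono mult_left_mono)
        show "sinh t * exp (- z * cosh t) * cosh (\<nu> * t) \<le> kern \<nu> 2 z t"
          unfolding kern_def using sh by (intro mult_right_mono) auto
        have "exp (- z * cosh t) * \<bar>sinh (\<nu> * t)\<bar> \<le> exp (- z * cosh t) * cosh (\<nu> * t)"
          using shv by simp
        also have "\<dots> \<le> kern \<nu> 2 z t" unfolding kern_def
        proof -
          have "1 \<le> cosh t ^ 2" using cosh_real_ge_1[of t] by (simp add: one_le_power)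
          then show "exp (- z * cosh t) * cosh (\<nu> * t) \<le> cosh t ^ 2 * exp (- z * cosh t) * cosh (\<nu> * t)"
            using mult_right_mono[of 1 "cosh t ^ 2" "exp (- z * cosh t) * cosh (\<nu> * t)"]
            by (simp add: mult.assoc)
        qed
        finally show "exp (- z * cosh t) * \<bar>sinh (\<nu> * t)\<bar> \<le> kern \<nu> 2 z t" .
      qed (use assms in auto)
      also have "\<dots> = (z + \<nu>) * kern \<nu> 2 z t" by (simp add: algebra_simps)
      also have "\<dots> \<le> (z + \<nu>) * ((fact N * 2 ^ N / z ^ N) * exp (- t))"
        using kern_bound[OF assms that N] assms by (intro mult_left_mono) auto
      finally show ?thesis by (simp add: C_def)
    qed
    then have ev: "eventually (\<lambda>n. norm (P (real n) - P 0) \<le> C * exp (- real n)) sequentially"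
      by (intro always_eventually allI) (simp add: P0)
    have "filterlim (\<lambda>n. - real n) at_bot sequentially"
      by (rule filterlim_compose[OF filterlim_uminus_at_bot_at_top filterlim_real_sequentially])
    then have "(\<lambda>n. exp (- real n)) \<longlonglongrightarrow> 0"
      by (rule filterlim_compose[OF exp_at_bot])
    then have "(\<lambda>n. C * exp (- real n)) \<longlonglongrightarrow> C * 0"
      by (intro tendsto_intros)
    then have "(\<lambda>n. C * exp (- real n)) \<longlonglongrightarrow> 0" by simp
    then show ?thesis by (rule Lim_null_comparison[OF ev])
  qed
  ultimately have "integral {0..} g = 0" by (metis LIMSEQ_unique)
  then show ?thesis using gI by (simp add: integral_unique)
qed

lemma powr_m1: "(x::real) > 0 \<Longrightarrow> x powr (a - 1) = x powr a / x"
  using powr_diff[of x a 1] by simp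

lemma powr_m2: "(x::real) > 0 \<Longrightarrow> x powr (a - 2) = x powr a / x\<^sup>2"
  using powr_diff[of x a 2] by simp

lemma powr_neg_le1: "(y::real) \<ge> 1 \<Longrightarrow> a \<ge> 0 \<Longrightarrow> y powr (- a) \<le> 1"
  using ge_one_powr_ge_zero[of y a] by (simp add: powr_minus inverse_le_1_iff)

lemma powr_le_pow: "(y::real) \<ge> 1 \<Longrightarrow> 0 \<le> a \<Longrightarrow> a \<le> real k \<Longrightarrow> y powr a \<le> y ^ k"
proof -
  assume y: "y \<ge> 1" and a: "0 \<le> a" "a \<le> real k"
  have "y powr a \<le> y powr real k" using y a by (intro powr_mono) auto
  also have "\<dots> = y ^ k" using y by (simp add: powr_realpow)
  finally show ?thesis .
qed

lemma green:
  fixes u u1 :: "real \<Rightarrow> real" and \<alpha> \<beta> \<zeta> C :: real and l :: nat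
  defines "g \<equiv> \<lambda>\<eta>. \<alpha> * \<eta> powr (real l + 1) + \<beta> * \<eta> powr (- real l)"
  defines "g1 \<equiv> \<lambda>\<eta>. \<alpha> * (real l + 1) * \<eta> powr (real l) - \<beta> * real l * \<eta> powr (- real l - 1)"
  assumes \<zeta>: "\<zeta> > 0"
  assumes du: "\<And>\<eta>. \<eta> > 0 \<Longrightarrow> (u has_real_derivative u1 \<eta>) (at \<eta>)"
  assumes du1: "\<And>\<eta>. \<eta> > 0 \<Longrightarrow> (u1 has_real_derivative (1 + real l * (real l + 1) / \<eta>\<^sup>2) * u \<eta>) (at \<eta>)"
  assumes nonneg: "\<And>\<eta>. \<eta> \<ge> \<zeta> \<Longrightarrow> g \<eta> * u \<eta> \<ge> 0"
  assumes decay: "\<And>\<eta>. \<eta> \<ge> 1 \<Longrightarrow> \<bar>u \<eta>\<bar> \<le> C * \<eta> * exp (- \<eta>) \<and> \<bar>u1 \<eta>\<bar> \<le> C * \<eta> * exp (- \<eta>)"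
  shows "((\<lambda>\<eta>. g \<eta> * u \<eta>) has_integral (g1 \<zeta> * u \<zeta> - g \<zeta> * u1 \<zeta>)) {\<zeta>..}"
proof -
  define \<Phi> where "\<Phi> \<eta> = g \<eta> * u1 \<eta> - g1 \<eta> * u \<eta>" for \<eta>
  have dg: "(g has_real_derivative g1 \<eta>) (at \<eta>)" if "\<eta> > 0" for \<eta>
    unfolding g_def g1_def using that
    by (auto intro!: derivative_eq_intros simp: algebra_simps)
  have dg1: "(g1 has_real_derivative real l * (real l + 1) / \<eta>\<^sup>2 * g \<eta>) (at \<eta>)" if "\<eta> > 0" for \<eta>
  proof -
    have d: "(g1 has_real_derivative \<alpha> * (real l + 1) * (real l * \<eta> powr (real l - 1))
        - \<beta> * real l * ((- real l - 1) * \<eta> powr (- real l - 1 - 1))) (at \<eta>)"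
      unfolding g1_def using that by (auto intro!: derivative_eq_intros)
    have e1: "\<eta> powr (real l - 1) = \<eta> powr (real l + 1) / \<eta>\<^sup>2"
      using powr_m2[OF that, of "real l + 1"] by simp
    have e2: "\<eta> powr (- real l - 2) = \<eta> powr (- real l) / \<eta>\<^sup>2"
      using powr_m2[OF that, of "- real l"] by (simp only:)
    show ?thesis unfolding g_def
      by (rule DERIV_cong[OF d]) (use that in \<open>simp add: e1 e2 field_simps\<close>)
  qed
  have dPhi: "(\<Phi> has_real_derivative g \<eta> * u \<eta>) (at \<eta>)" if "\<eta> > 0" for \<eta>
  proof -
    have "(\<Phi> has_real_derivative (g1 \<eta> * u1 \<eta> + (1 + real l * (real l + 1) / \<eta>\<^sup>2) * u \<eta> * g \<eta>)
        - (real l * (real l + 1) / \<eta>\<^sup>2 * g \<eta> * u \<eta> + u1 \<eta> * g1 \<eta>)) (at \<eta>)"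
      unfolding \<Phi>_def by (intro DERIV_diff DERIV_mult dg dg1 du du1 that)
    then show ?thesis by (rule DERIV_cong) (simp add: algebra_simps)
  qed
  have cont: "continuous_on {\<zeta>..y} (\<lambda>\<eta>. g \<eta> * u \<eta>)" for y
  proof (intro continuous_at_imp_continuous_on ballI)
    fix x assume "x \<in> {\<zeta>..y}"
    then have x: "x > 0" using \<zeta> by auto
    show "isCont (\<lambda>\<eta>. g \<eta> * u \<eta>) x"
      using DERIV_isCont[OF dg[OF x]] DERIV_isCont[OF du[OF x]] by (intro continuous_intros)
  qed
  have FTC: "((\<lambda>\<eta>. g \<eta> * u \<eta>) has_integral (\<Phi> y - \<Phi> \<zeta>)) {\<zeta>..y}" if "y \<ge> \<zeta>" for y
  proof (rule fundamental_theorem_of_calculus[OF that])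
    fix x assume "x \<in> {\<zeta>..y}"
    then have x: "x > 0" using \<zeta> by auto
    show "(\<Phi> has_vector_derivative g x * u x) (at x within {\<zeta>..y})"
      using has_field_derivative_at_within[OF dPhi[OF x]]
      by (simp add: has_real_derivative_iff_has_vector_derivative)
  qed
  have lim: "(\<Phi> \<longlongrightarrow> 0) at_top"
  proof -
    define M where "M = \<bar>C\<bar> * (\<bar>\<alpha>\<bar> + \<bar>\<beta>\<bar> + \<bar>\<alpha>\<bar> * (real l + 1) + \<bar>\<beta>\<bar> * real l)"
    have bnd: "norm (\<Phi> y) \<le> M * (y ^ (l + 2) / exp y)" if y: "y \<ge> 1" for y
    proof -
      have y0: "y > 0" using y by simp
      have p1: "y powr (real l + 1) \<le> y ^ (l + 1)" using y by (intro powr_le_pow) auto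
      have p2: "y powr (- real l) \<le> y ^ (l + 1)"
        using powr_neg_le1[OF y, of "real l"] one_le_power[OF y, of "l + 1"] by simp
      have p3: "y powr (real l) \<le> y ^ (l + 1)" using y by (intro powr_le_pow) auto
      have p4: "y powr (- real l - 1) \<le> y ^ (l + 1)"
        using powr_neg_le1[OF y, of "real l + 1"] one_le_power[OF y, of "l + 1"] by simp
      have gb: "\<bar>g y\<bar> \<le> (\<bar>\<alpha>\<bar> + \<bar>\<beta>\<bar>) * y ^ (l + 1)"
      proof -
        have "\<bar>g y\<bar> \<le> \<bar>\<alpha> * y powr (real l + 1)\<bar> + \<bar>\<beta> * y powr (- real l)\<bar>"
          unfolding g_def by (rule abs_triangle_ineq)
        also have "\<dots> = \<bar>\<alpha>\<bar> * y powr (real l + 1) + \<bar>\<beta>\<bar> * y powr (- real l)"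
          by (simp add: abs_mult)
        also have "\<dots> \<le> \<bar>\<alpha>\<bar> * y ^ (l + 1) + \<bar>\<beta>\<bar> * y ^ (l + 1)"
          using p1 p2 by (intro add_mono mult_left_mono) auto
        finally show ?thesis by (simp add: algebra_simps)
      qed
      have g1b: "\<bar>g1 y\<bar> \<le> (\<bar>\<alpha>\<bar> * (real l + 1) + \<bar>\<beta>\<bar> * real l) * y ^ (l + 1)"
      proof -
        have "\<bar>g1 y\<bar> \<le> \<bar>\<alpha> * (real l + 1) * y powr (real l)\<bar> + \<bar>\<beta> * real l * y powr (- real l - 1)\<bar>"
          unfolding g1_def by (rule abs_triangle_ineq4)
        also have "\<dots> = \<bar>\<alpha>\<bar> * (real l + 1) * y powr (real l) + \<bar>\<beta>\<bar> * real l * y powr (- real l - 1)"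
          by (simp add: abs_mult)
        also have "\<dots> \<le> \<bar>\<alpha>\<bar> * (real l + 1) * y ^ (l + 1) + \<bar>\<beta>\<bar> * real l * y ^ (l + 1)"
          using p3 p4 by (intro add_mono mult_left_mono) auto
        finally show ?thesis by (simp add: algebra_simps)
      qed
      have ub: "\<bar>u y\<bar> \<le> \<bar>C\<bar> * (y * exp (- y))" "\<bar>u1 y\<bar> \<le> \<bar>C\<bar> * (y * exp (- y))"
      proof -
        have "C * y * exp (- y) \<le> \<bar>C\<bar> * (y * exp (- y))"
          unfolding mult.assoc using y0 by (intro mult_right_mono) auto
        then show "\<bar>u y\<bar> \<le> \<bar>C\<bar> * (y * exp (- y))" "\<bar>u1 y\<bar> \<le> \<bar>C\<bar> * (y * exp (- y))"
          using decay[OF y] by linarith+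
      qed
      have "norm (\<Phi> y) \<le> \<bar>g y\<bar> * \<bar>u1 y\<bar> + \<bar>g1 y\<bar> * \<bar>u y\<bar>"
        unfolding \<Phi>_def real_norm_def abs_mult[symmetric] by (rule abs_triangle_ineq4)
      also have "\<dots> \<le> ((\<bar>\<alpha>\<bar> + \<bar>\<beta>\<bar>) * y ^ (l + 1)) * (\<bar>C\<bar> * (y * exp (- y)))
          + ((\<bar>\<alpha>\<bar> * (real l + 1) + \<bar>\<beta>\<bar> * real l) * y ^ (l + 1)) * (\<bar>C\<bar> * (y * exp (- y)))"
        using gb g1b ub y0 by (intro add_mono mult_mono) (auto intro!: mult_nonneg_nonneg add_nonneg_nonneg)
      also have "\<dots> = M * (y ^ (l + 2) / exp y)"
      proof -
        have "y ^ (l + 2) = y ^ (l + 1) * y" by simp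
        then show ?thesis by (simp add: M_def exp_minus divide_inverse algebra_simps)
      qed
      finally show ?thesis .
    qed
    have "((\<lambda>y. M * (y ^ (l + 2) / exp y)) \<longlongrightarrow> M * 0) at_top"
      by (intro tendsto_intros tendsto_power_div_exp_0)
    then have lim0: "((\<lambda>y. M * (y ^ (l + 2) / exp y)) \<longlongrightarrow> 0) at_top" by simp
    have ev2: "eventually (\<lambda>y. norm (\<Phi> y) \<le> M * (y ^ (l + 2) / exp y)) at_top"
      unfolding eventually_at_top_linorder by (intro exI[of _ 1] allI impI bnd)
    show ?thesis using Lim_null_comparison[OF ev2 lim0] by simp
  qed
  have "((\<lambda>\<eta>. g \<eta> * u \<eta>) has_integral (0 - \<Phi> \<zeta>)) {\<zeta>..}"
  proof (rule has_integral_to_inf)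
    show "(\<lambda>\<eta>. g \<eta> * u \<eta>) integrable_on {\<zeta>..y}" for y
      by (intro integrable_continuous_interval cont)
    have ev: "eventually (\<lambda>y. \<Phi> y - \<Phi> \<zeta> = integral {\<zeta>..y} (\<lambda>\<eta>. g \<eta> * u \<eta>)) at_top"
      unfolding eventually_at_top_linorder
      by (intro exI[of _ \<zeta>] allI impI integral_unique[symmetric] FTC)
    have "((\<lambda>y. \<Phi> y - \<Phi> \<zeta>) \<longlongrightarrow> 0 - \<Phi> \<zeta>) at_top"
      by (intro tendsto_intros lim)
    then show "((\<lambda>y. integral {\<zeta>..y} (\<lambda>\<eta>. g \<eta> * u \<eta>)) \<longlongrightarrow> 0 - \<Phi> \<zeta>) at_top"
      by (rule Lim_transform_eventually[OF _ ev])
    show "g y * u y \<ge> 0" if "y \<ge> \<zeta>" for y using nonneg that .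
  qed
  then show ?thesis by (simp add: \<Phi>_def)
qed

definition uu :: "nat \<Rightarrow> real \<Rightarrow> real" where
  "uu l \<eta> = sqrt \<eta> * Km (real l + 1/2) 0 \<eta>"

definition uu1 :: "nat \<Rightarrow> real \<Rightarrow> real" where
  "uu1 l \<eta> = Km (real l + 1/2) 0 \<eta> / sqrt \<eta> / 2 - sqrt \<eta> * Km (real l + 1/2) (Suc 0) \<eta>"

lemma aux1: "inverse (s::real) / 2 * a + (- b) * s = a / s / 2 - s * b"
  by (cases "s = 0") (simp_all add: field_simps)

lemma aux3: "(s::real) > 0 \<Longrightarrow> (s\<^sup>2)\<^sup>2 * K2 - s\<^sup>2 * K1 - ((s\<^sup>2)\<^sup>2 + \<nu>\<^sup>2) * K0 = 0
   \<Longrightarrow> K2 = (s\<^sup>2 * K1 + (s ^ 4 + \<nu>\<^sup>2) * K0) / s ^ 4"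
  by (simp add: field_simps)

lemma aux2:
  fixes s K0 K1 K2 L \<nu> :: real
  assumes s: "s > 0" and K2: "K2 = (s\<^sup>2 * K1 + (s ^ 4 + \<nu>\<^sup>2) * K0) / s ^ 4" and \<nu>: "\<nu> = L + 1/2"
    and \<eta>: "\<eta> = s\<^sup>2"
  shows "((- K1) * s - K0 * (inverse s / 2)) / (s * s) / 2 - (inverse s / 2 * K1 + (- K2) * s)
     = (1 + L * (L + 1) / \<eta>\<^sup>2) * (s * K0)"
  unfolding K2 \<nu> \<eta> using s by (simp add: field_simps) (simp add: algebra_simps eval_nat_numeral)

lemma uu_deriv:
  assumes "\<eta> > 0"
  shows "(uu l has_real_derivative uu1 l \<eta>) (at \<eta>)"
proof -
  have "((\<lambda>x. sqrt x * Km (real l + 1/2) 0 x) has_real_derivative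
      inverse (sqrt \<eta>) / 2 * Km (real l + 1/2) 0 \<eta> + (- Km (real l + 1/2) (Suc 0) \<eta>) * sqrt \<eta>) (at \<eta>)"
    by (rule DERIV_mult[OF DERIV_real_sqrt[OF assms] Km_deriv]) (use assms in auto)
  then show ?thesis unfolding uu_def[abs_def]
    by (rule DERIV_cong) (simp only: uu1_def aux1)
qed

lemma uu1_deriv:
  assumes "\<eta> > 0"
  shows "(uu1 l has_real_derivative (1 + real l * (real l + 1) / \<eta>\<^sup>2) * uu l \<eta>) (at \<eta>)"
proof -
  define \<nu> where "\<nu> = real l + 1/2"
  have \<nu>: "\<nu> \<ge> 0" by (simp add: \<nu>_def)
  define K0 where "K0 = Km \<nu> 0 \<eta>"
  define K1 where "K1 = Km \<nu> (Suc 0) \<eta>"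
  define K2 where "K2 = Km \<nu> (Suc (Suc 0)) \<eta>"
  have d: "(uu1 l has_real_derivative
      (((- Km \<nu> (Suc 0) \<eta>) * sqrt \<eta> - Km \<nu> 0 \<eta> * (inverse (sqrt \<eta>) / 2)) / (sqrt \<eta> * sqrt \<eta>)) / 2
      - (inverse (sqrt \<eta>) / 2 * Km \<nu> (Suc 0) \<eta> + (- Km \<nu> (Suc (Suc 0)) \<eta>) * sqrt \<eta>)) (at \<eta>)"
    unfolding uu1_def[abs_def] \<nu>_def[symmetric]
    by (rule DERIV_diff[OF DERIV_cdivide[OF DERIV_divide[OF Km_deriv[OF \<nu> assms] DERIV_real_sqrt[OF assms]]]
          DERIV_mult[OF DERIV_real_sqrt[OF assms] Km_deriv[OF \<nu> assms]]]) (use assms in auto)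
  have ode: "\<eta>\<^sup>2 * K2 - \<eta> * K1 - (\<eta>\<^sup>2 + \<nu>\<^sup>2) * K0 = 0"
    using Km_ode[OF \<nu> assms] unfolding K0_def K1_def K2_def by (simp add: numeral_2_eq_2)
  define s where "s = sqrt \<eta>"
  have s: "s > 0" "\<eta> = s\<^sup>2" using assms by (auto simp: s_def)
  have K2: "K2 = (s\<^sup>2 * K1 + (s ^ 4 + \<nu>\<^sup>2) * K0) / s ^ 4"
    using ode s by (intro aux3) simp_all
  show ?thesis
  proof (rule DERIV_cong[OF d])
    show "(((- Km \<nu> (Suc 0) \<eta>) * sqrt \<eta> - Km \<nu> 0 \<eta> * (inverse (sqrt \<eta>) / 2)) / (sqrt \<eta> * sqrt \<eta>)) / 2
      - (inverse (sqrt \<eta>) / 2 * Km \<nu> (Suc 0) \<eta> + (- Km \<nu> (Suc (Suc 0)) \<eta>) * sqrt \<eta>)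
      = (1 + real l * (real l + 1) / \<eta>\<^sup>2) * uu l \<eta>"
      unfolding uu_def \<nu>_def[symmetric] s_def[symmetric]
        K0_def[symmetric] K1_def[symmetric] K2_def[symmetric]
      by (rule aux2[OF s(1) K2 _ s(2)]) (simp add: \<nu>_def)
  qed
qed

lemma sqrt_le_self: "(x::real) \<ge> 1 \<Longrightarrow> sqrt x \<le> x"
proof -
  assume x: "x \<ge> 1"
  then have "sqrt x * 1 \<le> sqrt x * sqrt x" by (intro mult_left_mono) auto
  then show ?thesis using x by simp
qed

lemma uu_decay:
  fixes l :: nat
  assumes "\<eta> \<ge> 1"
  defines "C \<equiv> exp 1 * (Km (real l + 1/2) 0 1 + Km (real l + 1/2) (Suc 0) 1)"
  shows "\<bar>uu l \<eta>\<bar> \<le> C * \<eta> * exp (- \<eta>) \<and> \<bar>uu1 l \<eta>\<bar> \<le> C * \<eta> * exp (- \<eta>)"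
proof -
  define \<nu> where "\<nu> = real l + 1/2"
  have \<nu>: "\<nu> \<ge> 0" by (simp add: \<nu>_def)
  have e: "exp (- (\<eta> - 1)) = exp 1 * exp (- \<eta>)" by (simp flip: exp_add)
  have d0: "Km \<nu> 0 \<eta> \<le> exp 1 * exp (- \<eta>) * Km \<nu> 0 1"
    using Km_decay[OF \<nu> assms(1), of 0] e by simp
  have d1: "Km \<nu> (Suc 0) \<eta> \<le> exp 1 * exp (- \<eta>) * Km \<nu> (Suc 0) 1"
    using Km_decay[OF \<nu> assms(1), of "Suc 0"] e by simp
  have n: "Km \<nu> 0 \<eta> \<ge> 0" "Km \<nu> (Suc 0) \<eta> \<ge> 0" "Km \<nu> 0 1 \<ge> 0" "Km \<nu> (Suc 0) 1 \<ge> 0"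
    by (auto intro: Km_nonneg)
  have sq: "1 \<le> sqrt \<eta>" "sqrt \<eta> \<le> \<eta>" using assms(1) by (auto intro: sqrt_le_self)
  have E: "exp 1 * exp (- \<eta>) > 0" by simp
  have "\<bar>uu l \<eta>\<bar> = sqrt \<eta> * Km \<nu> 0 \<eta>" unfolding uu_def \<nu>_def[symmetric] using n sq by (simp add: abs_mult)
  also have "\<dots> \<le> \<eta> * (exp 1 * exp (- \<eta>) * Km \<nu> 0 1)"
    using sq d0 n by (intro mult_mono) auto
  also have "\<dots> \<le> \<eta> * (exp 1 * exp (- \<eta>) * (Km \<nu> 0 1 + Km \<nu> (Suc 0) 1))"
    using n E assms by (intro mult_left_mono) auto
  also have "\<dots> = C * \<eta> * exp (- \<eta>)" by (simp add: C_def \<nu>_def)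
  finally have 1: "\<bar>uu l \<eta>\<bar> \<le> C * \<eta> * exp (- \<eta>)" .
  have "\<bar>uu1 l \<eta>\<bar> \<le> Km \<nu> 0 \<eta> / sqrt \<eta> / 2 + sqrt \<eta> * Km \<nu> (Suc 0) \<eta>"
    unfolding uu1_def \<nu>_def[symmetric] using n sq by (simp add: abs_le_iff)
  also have "\<dots> \<le> \<eta> * Km \<nu> 0 \<eta> + \<eta> * Km \<nu> (Suc 0) \<eta>"
  proof (intro add_mono mult_right_mono)
    have "Km \<nu> 0 \<eta> / sqrt \<eta> / 2 \<le> Km \<nu> 0 \<eta>"
    proof -
      have "Km \<nu> 0 \<eta> * 1 \<le> Km \<nu> 0 \<eta> * (sqrt \<eta> * 2)"
        by (intro mult_left_mono) (use n sq(1) in linarith)+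
      then show ?thesis using sq by (simp add: divide_le_eq)
    qed
    also have "\<dots> \<le> \<eta> * Km \<nu> 0 \<eta>" using n assms by (simp add: mult_le_cancel_right1)
    finally show "Km \<nu> 0 \<eta> / sqrt \<eta> / 2 \<le> \<eta> * Km \<nu> 0 \<eta>" .
  qed (use sq n in auto)
  also have "\<dots> \<le> \<eta> * (exp 1 * exp (- \<eta>) * Km \<nu> 0 1) + \<eta> * (exp 1 * exp (- \<eta>) * Km \<nu> (Suc 0) 1)"
    using d0 d1 assms by (intro add_mono mult_left_mono) auto
  also have "\<dots> = C * \<eta> * exp (- \<eta>)" by (simp add: C_def \<nu>_def algebra_simps)
  finally show ?thesis using 1 by simp
qed

lemma uu_pos: "\<eta> > 0 \<Longrightarrow> uu l \<eta> > 0"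
  unfolding uu_def by (intro mult_pos_pos Km_pos) auto

lemma besselK_Km: "besselK \<nu> = Km \<nu> 0"
  by (rule ext) (simp add: besselK_def Km_def kern_def[abs_def])

lemma H0_eq: "\<eta> > 0 \<Longrightarrow> H0 l \<eta> = sqrt (2 / pi) * exp \<eta> * uu l \<eta>"
  unfolding H0_def uu_def besselK_Km by (simp add: powr_half_sqrt mult.assoc)

lemma aux4:
  fixes s z c E K0 K1 :: real
  assumes "s > 0" "z = s\<^sup>2"
  shows "(c * E * s + 1 / 2 * (s / z) * (c * E)) * K0 + (- K1) * (c * E * s)
    = c * E * (s * K0 + (K0 / s / 2 - s * K1))"
  using assms by (simp add: field_simps power2_eq_square)

lemma H0_deriv:
  assumes "\<zeta> > 0"
  shows "(H0 l has_real_derivative sqrt (2 / pi) * exp \<zeta> * (uu l \<zeta> + uu1 l \<zeta>)) (at \<zeta>)"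
proof -
  define \<nu> where "\<nu> = real l + 1/2"
  have \<nu>: "\<nu> \<ge> 0" by (simp add: \<nu>_def)
  define c where "c = sqrt (2 / pi)"
  have H: "H0 l = (\<lambda>z. c * exp z * z powr (1/2) * Km \<nu> 0 z)"
    unfolding H0_def[abs_def] besselK_Km c_def \<nu>_def ..
  have d: "((\<lambda>z. c * exp z * z powr (1/2) * Km \<nu> 0 z) has_real_derivative
     (c * exp \<zeta> * \<zeta> powr (1/2) + 1/2 * \<zeta> powr (1/2 - 1) * (c * exp \<zeta>)) * Km \<nu> 0 \<zeta>
     + (- Km \<nu> (Suc 0) \<zeta>) * (c * exp \<zeta> * \<zeta> powr (1/2))) (at \<zeta>)"
    by (rule DERIV_mult[OF DERIV_mult[OF DERIV_cmult[OF DERIV_exp] has_real_derivative_powr[OF assms]]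
          Km_deriv[OF \<nu> assms]])
  have s: "sqrt \<zeta> > 0" "\<zeta> = (sqrt \<zeta>)\<^sup>2" using assms by auto
  have p1: "\<zeta> powr (1/2) = sqrt \<zeta>" using assms by (simp add: powr_half_sqrt)
  have p2: "\<zeta> powr (1/2 - 1) = sqrt \<zeta> / \<zeta>" using powr_m1[OF assms, of "1/2"] p1 by simp
  show ?thesis unfolding H
    by (rule DERIV_cong[OF d]) (simp only: p1 p2 aux4[OF s] uu_def uu1_def c_def \<nu>_def)
qed

lemma G0_deriv:
  assumes "\<zeta> > 0"
  shows "deriv (\<lambda>z. G0 l z \<eta>) \<zeta> =
    (\<eta> ^ (l + 1) * (- real l * \<zeta> powr (- real l - 1)) - real (l + 1) * \<zeta> ^ (l + 1 - Suc 0) * \<eta> powr (- real l))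
      / (2 * real l + 1)"
proof (rule DERIV_imp_deriv)
  show "((\<lambda>z. G0 l z \<eta>) has_real_derivative
    (\<eta> ^ (l + 1) * (- real l * \<zeta> powr (- real l - 1)) - real (l + 1) * \<zeta> ^ (l + 1 - Suc 0) * \<eta> powr (- real l))
      / (2 * real l + 1)) (at \<zeta>)"
    unfolding G0_def
    by (rule DERIV_cdivide[OF DERIV_diff[OF DERIV_cmult[OF has_real_derivative_powr[OF assms]]
          DERIV_cmult_right[OF DERIV_pow]]])
qed

lemma coefD1:
  fixes A B P Q L D :: real
  assumes "D \<noteq> 0"
  shows "A / D * (L + 1) * B - - P / D * L * Q = ((L + 1) * (A * B) + L * (P * Q)) / D"
  using assms by (simp add: field_simps)

lemma coefD2:
  fixes A B P Q L D :: real
  assumes "D \<noteq> 0"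
  shows "L * A / D * B + (L + 1) * P / D * Q = (L * (A * B) + (L + 1) * (P * Q)) / D"
  using assms by (simp add: field_simps)

lemma lin1: "(a / D) * X + (- b / D) * Y = (X * a - b * Y) / (D::real)"
  by (cases "D = 0") (simp_all add: field_simps)

lemma lin2: "(E * (- L * Z) - (L + 1) * Y * F) / (D::real) = - ((L * Z / D) * E + ((L + 1) * Y / D) * F)"
  by (cases "D = 0") (simp_all add: field_simps)

lemma coef1:
  fixes A B P Q L :: real
  assumes "A * B = 1" "P * Q = 1" "L \<ge> 0"
  shows "A / (2 * L + 1) * (L + 1) * B - - P / (2 * L + 1) * L * Q = 1"
  using assms by (subst coefD1) auto

lemma coef2:
  fixes A B P Q L :: real
  assumes "A * B = 1" "P * Q = 1" "L \<ge> 0"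
  shows "L * A / (2 * L + 1) * B + (L + 1) * P / (2 * L + 1) * Q = 1"
  using assms by (subst coefD2) auto

theorem lemma46:
  fixes l :: nat and \<zeta> :: real
  assumes "\<zeta> > 0"
  shows "((\<lambda>\<eta>. exp (- \<eta> + \<zeta>) * G0 l \<zeta> \<eta> * (H0 l \<eta> / H0 l \<zeta>)) has_integral 1) {\<zeta>..} \<and>
         ((\<lambda>\<eta>. exp (- \<eta> + \<zeta>) * deriv (\<lambda>z. G0 l z \<eta>) \<zeta> * (H0 l \<eta> / H0 l \<zeta>))
           has_integral (-1 + deriv (H0 l) \<zeta> / H0 l \<zeta>)) {\<zeta>..}"
proof -
  define c where "c = sqrt (2 / pi)"
  have c: "c > 0" by (simp add: c_def)
  have u\<zeta>: "uu l \<zeta> > 0" using uu_pos[OF assms] .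
  have den: "2 * real l + 1 > 0" by simp
  define C where "C = exp 1 * (Km (real l + 1/2) 0 1 + Km (real l + 1/2) (Suc 0) 1)"
  have decay: "\<And>\<eta>. \<eta> \<ge> 1 \<Longrightarrow> \<bar>uu l \<eta>\<bar> \<le> C * \<eta> * exp (- \<eta>) \<and> \<bar>uu1 l \<eta>\<bar> \<le> C * \<eta> * exp (- \<eta>)"
    unfolding C_def by (rule uu_decay)
  have du: "\<And>\<eta>. \<eta> > 0 \<Longrightarrow> (uu l has_real_derivative uu1 l \<eta>) (at \<eta>)" by (rule uu_deriv)
  have du1: "\<And>\<eta>. \<eta> > 0 \<Longrightarrow> (uu1 l has_real_derivative (1 + real l * (real l + 1) / \<eta>\<^sup>2) * uu l \<eta>) (at \<eta>)"
    by (rule uu1_deriv)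
  have unn: "uu l \<eta> \<ge> 0" if "\<eta> \<ge> \<zeta>" for \<eta> using uu_pos[of \<eta> l] that assms by simp
  have pw: "\<eta> powr (real l + 1) = \<eta> ^ (l + 1)" if "\<eta> > 0" for \<eta>
    using powr_realpow[OF that, of "l + 1"] by (simp add: add.commute)
  have pw2: "\<eta> powr (real l) = \<eta> ^ l" if "\<eta> > 0" for \<eta>
    using powr_realpow[OF that, of l] by simp
  have H0\<zeta>: "H0 l \<zeta> = c * exp \<zeta> * uu l \<zeta>" using H0_eq[OF assms] by (simp add: c_def)
  have ratio: "exp (- \<eta> + \<zeta>) * (H0 l \<eta> / H0 l \<zeta>) = uu l \<eta> / uu l \<zeta>" if "\<eta> \<ge> \<zeta>" for \<eta>
  proof -
    have "\<eta> > 0" using that assms by simp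
    then have "H0 l \<eta> = c * exp \<eta> * uu l \<eta>" using H0_eq by (simp add: c_def)
    moreover have "exp (- \<eta> + \<zeta>) * exp \<eta> = exp \<zeta>" by (simp flip: exp_add)
    ultimately show ?thesis unfolding H0\<zeta> using c u\<zeta>
      by (simp add: field_simps)
  qed
  have powr_inv1: "\<zeta> powr (- real l) * \<zeta> powr (real l) = 1"
    using assms by (simp flip: powr_add)
  have powr_inv2: "\<zeta> ^ (l + 1) * \<zeta> powr (- real l - 1) = 1"
  proof -
    have "\<zeta> powr (real l + 1) * \<zeta> powr (- real l - 1) = 1"
      using assms by (simp flip: powr_add)
    then show ?thesis using pw[OF assms] by simp
  qed
  define a1 where "a1 = \<zeta> powr (- real l) / (2 * real l + 1)"
  define b1 where "b1 = - (\<zeta> ^ (l + 1)) / (2 * real l + 1)"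
  have g1nn: "(a1 * \<eta> powr (real l + 1) + b1 * \<eta> powr (- real l)) * uu l \<eta> \<ge> 0" if "\<eta> \<ge> \<zeta>" for \<eta>
  proof (rule mult_nonneg_nonneg[OF _ unn[OF that]])
    have "\<zeta> ^ (l + 1) * \<eta> powr (- real l) \<le> \<eta> powr (real l + 1) * \<zeta> powr (- real l)"
    proof (rule mult_mono)
      show "\<zeta> ^ (l + 1) \<le> \<eta> powr (real l + 1)"
        using pw[OF assms] powr_mono2[of "real l + 1" \<zeta> \<eta>] that assms by simp
      show "\<eta> powr (- real l) \<le> \<zeta> powr (- real l)"
        using powr_mono2'[of "- real l" \<zeta> \<eta>] that assms by simp
    qed auto
    then show "0 \<le> a1 * \<eta> powr (real l + 1) + b1 * \<eta> powr (- real l)"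
      unfolding a1_def b1_def lin1 using den by simp
  qed
  note I1 = green[where u="uu l" and ?u1.0="uu1 l" and \<alpha>=a1 and \<beta>=b1 and \<zeta>=\<zeta> and C=C and l=l,
      OF assms du du1 g1nn decay]
  have v1: "(a1 * (real l + 1) * \<zeta> powr real l - b1 * real l * \<zeta> powr (- real l - 1)) * uu l \<zeta>
      - (a1 * \<zeta> powr (real l + 1) + b1 * \<zeta> powr (- real l)) * uu1 l \<zeta> = uu l \<zeta>"
  proof -
    have "a1 * (real l + 1) * \<zeta> powr real l - b1 * real l * \<zeta> powr (- real l - 1) = 1"
      unfolding a1_def b1_def by (rule coef1[OF powr_inv1 powr_inv2]) simp
    moreover have "a1 * \<zeta> powr (real l + 1) + b1 * \<zeta> powr (- real l) = 0"
      unfolding a1_def b1_def lin1 pw[OF assms] by simp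
    ultimately show ?thesis by simp
  qed
  have J1: "((\<lambda>\<eta>. (a1 * \<eta> powr (real l + 1) + b1 * \<eta> powr (- real l)) * uu l \<eta> * (1 / uu l \<zeta>))
      has_integral 1) {\<zeta>..}"
    using has_integral_mult_left[OF I1[unfolded v1], of "1 / uu l \<zeta>"] u\<zeta> by simp
  have P1: "((\<lambda>\<eta>. exp (- \<eta> + \<zeta>) * G0 l \<zeta> \<eta> * (H0 l \<eta> / H0 l \<zeta>)) has_integral 1) {\<zeta>..}"
  proof (rule has_integral_cong[THEN iffD1, OF _ J1])
    fix \<eta> :: real assume "\<eta> \<in> {\<zeta>..}"
    then have \<eta>: "\<eta> \<ge> \<zeta>" "\<eta> > 0" using assms by auto
    have G: "G0 l \<zeta> \<eta> = a1 * \<eta> powr (real l + 1) + b1 * \<eta> powr (- real l)"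
      unfolding a1_def b1_def lin1 G0_def pw[OF \<eta>(2)] by simp
    have "exp (- \<eta> + \<zeta>) * G0 l \<zeta> \<eta> * (H0 l \<eta> / H0 l \<zeta>)
        = G0 l \<zeta> \<eta> * (exp (- \<eta> + \<zeta>) * (H0 l \<eta> / H0 l \<zeta>))" by (simp only: mult_ac)
    also have "\<dots> = G0 l \<zeta> \<eta> * (uu l \<eta> / uu l \<zeta>)" by (simp only: ratio[OF \<eta>(1)])
    finally show "(a1 * \<eta> powr (real l + 1) + b1 * \<eta> powr (- real l)) * uu l \<eta> * (1 / uu l \<zeta>)
        = exp (- \<eta> + \<zeta>) * G0 l \<zeta> \<eta> * (H0 l \<eta> / H0 l \<zeta>)"
      unfolding G by simp
  qed
  define a2 where "a2 = real l * \<zeta> powr (- real l - 1) / (2 * real l + 1)"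
  define b2 where "b2 = (real l + 1) * \<zeta> ^ l / (2 * real l + 1)"
  have g2nn: "(a2 * \<eta> powr (real l + 1) + b2 * \<eta> powr (- real l)) * uu l \<eta> \<ge> 0" if "\<eta> \<ge> \<zeta>" for \<eta>
    using unn[OF that] assms unfolding a2_def b2_def
    by (intro mult_nonneg_nonneg add_nonneg_nonneg divide_nonneg_pos) auto
  note I2 = green[where u="uu l" and ?u1.0="uu1 l" and \<alpha>=a2 and \<beta>=b2 and \<zeta>=\<zeta> and C=C and l=l,
      OF assms du du1 g2nn decay]
  have v2: "(a2 * (real l + 1) * \<zeta> powr real l - b2 * real l * \<zeta> powr (- real l - 1)) * uu l \<zeta>
      - (a2 * \<zeta> powr (real l + 1) + b2 * \<zeta> powr (- real l)) * uu1 l \<zeta> = - uu1 l \<zeta>"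
  proof -
    have "a2 * (real l + 1) * \<zeta> powr real l - b2 * real l * \<zeta> powr (- real l - 1) = 0"
      unfolding a2_def b2_def pw2[OF assms] by (simp add: algebra_simps)
    moreover have "a2 * \<zeta> powr (real l + 1) + b2 * \<zeta> powr (- real l) = 1"
    proof -
      have i1: "\<zeta> powr (- real l - 1) * \<zeta> powr (real l + 1) = 1" using assms by (simp flip: powr_add)
      have i2: "\<zeta> ^ l * \<zeta> powr (- real l) = 1" using powr_inv1 pw2[OF assms] by (simp add: mult.commute)
      show ?thesis unfolding a2_def b2_def by (rule coef2[OF i1 i2]) simp
    qed
    ultimately show ?thesis by simp
  qed
  have J2: "((\<lambda>\<eta>. - ((a2 * \<eta> powr (real l + 1) + b2 * \<eta> powr (- real l)) * uu l \<eta>) * (1 / uu l \<zeta>))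
      has_integral (uu1 l \<zeta> / uu l \<zeta>)) {\<zeta>..}"
    using has_integral_mult_left[OF has_integral_neg[OF I2[unfolded v2]], of "1 / uu l \<zeta>"] by simp
  have dH: "deriv (H0 l) \<zeta> = c * exp \<zeta> * (uu l \<zeta> + uu1 l \<zeta>)"
    unfolding c_def by (rule DERIV_imp_deriv[OF H0_deriv[OF assms]])
  have val: "-1 + deriv (H0 l) \<zeta> / H0 l \<zeta> = uu1 l \<zeta> / uu l \<zeta>"
    unfolding dH H0\<zeta> using c u\<zeta> by (simp add: field_simps)
  have P2: "((\<lambda>\<eta>. exp (- \<eta> + \<zeta>) * deriv (\<lambda>z. G0 l z \<eta>) \<zeta> * (H0 l \<eta> / H0 l \<zeta>))
           has_integral (-1 + deriv (H0 l) \<zeta> / H0 l \<zeta>)) {\<zeta>..}"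
    unfolding val
  proof (rule has_integral_cong[THEN iffD1, OF _ J2])
    fix \<eta> :: real assume "\<eta> \<in> {\<zeta>..}"
    then have \<eta>: "\<eta> \<ge> \<zeta>" "\<eta> > 0" using assms by auto
    have G: "deriv (\<lambda>z. G0 l z \<eta>) \<zeta> = - (a2 * \<eta> powr (real l + 1) + b2 * \<eta> powr (- real l))"
    proof -
      have e: "real (l + 1) = real l + 1" "l + 1 - Suc 0 = l" by simp_all
      show ?thesis unfolding G0_deriv[OF assms] a2_def b2_def pw[OF \<eta>(2)] e by (rule lin2)
    qed
    have "exp (- \<eta> + \<zeta>) * deriv (\<lambda>z. G0 l z \<eta>) \<zeta> * (H0 l \<eta> / H0 l \<zeta>)
        = deriv (\<lambda>z. G0 l z \<eta>) \<zeta> * (exp (- \<eta> + \<zeta>) * (H0 l \<eta> / H0 l \<zeta>))" by (simp only: mult_ac)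
    also have "\<dots> = deriv (\<lambda>z. G0 l z \<eta>) \<zeta> * (uu l \<eta> / uu l \<zeta>)" by (simp only: ratio[OF \<eta>(1)])
    finally show "- ((a2 * \<eta> powr (real l + 1) + b2 * \<eta> powr (- real l)) * uu l \<eta>) * (1 / uu l \<zeta>)
        = exp (- \<eta> + \<zeta>) * deriv (\<lambda>z. G0 l z \<eta>) \<zeta> * (H0 l \<eta> / H0 l \<zeta>)"
      unfolding G by (simp add: algebra_simps)
  qed
  show ?thesis using P1 P2 by blast
qed

end
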